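(* Let $(\mathfrak{g},[\cdot,\ldots,\cdot],\varepsilon,\alpha)$ be an $n$-Hom-Lie color algebra with $n\geq3$, let $p$ be a positive integer with $p<n$, and let $a_1,\ldots,a_p\in\mathfrak{g}_0$ satisfy $\alpha(a_i)=a_i$ for all $i\in\{1,\ldots,p\}$. Then $(\mathfrak{g},\{\cdot,\ldots,\cdot\},\varepsilon,\alpha)$ is an $(n-p)$-Hom-Lie color algebra, where $\{x_1,\ldots,x_{n-p}\}=[a_1,\ldots,a_p,x_1,\ldots,x_{n-p}]$ for all $x_1,\ldots,x_{n-p}\in\mathfrak{g}$.
   Context: $\mathbb{K}$ is a field of characteristic zero and $\Gamma$ an abelian group with neutral element $0$; $\mathfrak{g}_0$ is the degree-$0$ component. A bicharacter is a map $\varepsilon:\Gamma\times\Gamma\to\mathbb{K}\setminus\{0\}$ with $\varepsilon(a,b)\varepsilon(b,a)=1$, $\varepsilon(a,b+c)=\varepsilon(a,b)\varepsilon(a,c)$, $\varepsilon(a+b,c)=\varepsilon(a,c)\varepsilon(b,c)$. For homogeneous $x,y$, $\varepsilon(x,y)=\varepsilon(|x|,|y|)$ and $\varepsilon(x,y_1+\dots+y_k)=\varepsilon(|x|,|y_1|+\dots+|y_k|)$ ($=1$ for an empty sum). An $m$-Hom-Lie color algebra $(\mathfrak{g},[\cdot,\ldots,\cdot],\varepsilon,\alpha)$ is a $\Gamma$-graded vector space with an $m$-linear bracket of degree zero, a bicharacter $\varepsilon$ and a degree-zero linear map $\alpha$ such that for homogeneous elements: (i) $[x_1,\ldots,x_i,x_{i+1},\ldots,x_m]=-\varepsilon(x_i,x_{i+1})[x_1,\ldots,x_{i+1},x_i,\ldots,x_m]$;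 (ii) $[\alpha(x_1),\ldots,\alpha(x_{m-1}),[y_1,\ldots,y_m]]=\sum_{i=1}^m\varepsilon(x_1+\dots+x_{m-1},y_1+\dots+y_{i-1})[\alpha(y_1),\ldots,\alpha(y_{i-1}),[x_1,\ldots,x_{m-1},y_i],\alpha(y_{i+1}),\ldots,\alpha(y_m)]$. *)

theory Defs
  imports Complex_Main
begin

text \<open>A \<Gamma>-graded vector space over a field 'k: carrier type 'v with scalar
multiplication smult, grading given by the homogeneous components G a (a :: 'g).\<close>

definition graded_vs :: "('k::field \<Rightarrow> 'v::ab_group_add \<Rightarrow> 'v) \<Rightarrow> ('g::ab_group_add \<Rightarrow> 'v set) \<Rightarrow> bool" where
  "graded_vs smult G \<longleftrightarrow>
     vector_space smult \<and>
     (\<forall>a. 0 \<in> G a \<and> (\<forall>x\<in>G a. \<forall>y\<in>G a. x + y \<in> G a) \<and> (\<forall>c. \<forall>x\<in>G a. smult c x \<in> G a)) \<and>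
     (\<forall>v. \<exists>!c. finite {a. c a \<noteq> 0} \<and> (\<forall>a. c a \<in> G a) \<and> v = (\<Sum>a\<in>{a. c a \<noteq> 0}. c a))"

definition bicharacter :: "('g::ab_group_add \<Rightarrow> 'g \<Rightarrow> 'k::field) \<Rightarrow> bool" where
  "bicharacter eps \<longleftrightarrow>
     (\<forall>a b. eps a b \<noteq> 0) \<and>
     (\<forall>a b. eps a b * eps b a = 1) \<and>
     (\<forall>a b c. eps a (b + c) = eps a b * eps a c) \<and>
     (\<forall>a b c. eps (a + b) c = eps a c * eps b c)"

definition homog_list :: "('g \<Rightarrow> 'v set) \<Rightarrow> 'v list \<Rightarrow> 'g list \<Rightarrow> bool" where
  "homog_list G xs ds \<longleftrightarrow> length xs = length ds \<and> (\<forall>j<length xs. xs ! j \<in> G (ds ! j))"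

definition swap_adj :: "nat \<Rightarrow> 'a list \<Rightarrow> 'a list" where
  "swap_adj i xs = xs[i := xs ! Suc i, Suc i := xs ! i]"

text \<open>m-Hom-Lie color algebra (g, br, eps, alpha); the m-ary bracket is a function
on lists, only its values on lists of length m matter.\<close>
definition hom_lie_color ::
  "nat \<Rightarrow> ('k::field \<Rightarrow> 'v::ab_group_add \<Rightarrow> 'v) \<Rightarrow> ('g::ab_group_add \<Rightarrow> 'v set)
   \<Rightarrow> ('v list \<Rightarrow> 'v) \<Rightarrow> ('g \<Rightarrow> 'g \<Rightarrow> 'k) \<Rightarrow> ('v \<Rightarrow> 'v) \<Rightarrow> bool" where
  "hom_lie_color m smult G br eps alpha \<longleftrightarrow>
     graded_vs smult G \<and>
     bicharacter eps \<and>
     \<comment> \<open>the bracket is m-linear\<close>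
     (\<forall>xs i. length xs = m \<longrightarrow> i < m \<longrightarrow> Vector_Spaces.linear smult smult (\<lambda>v. br (xs[i := v]))) \<and>
     \<comment> \<open>the bracket has degree zero\<close>
     (\<forall>xs ds. length xs = m \<longrightarrow> homog_list G xs ds \<longrightarrow> br xs \<in> G (sum_list ds)) \<and>
     \<comment> \<open>alpha is linear of degree zero\<close>
     Vector_Spaces.linear smult smult alpha \<and>
     (\<forall>a. alpha ` G a \<subseteq> G a) \<and>
     \<comment> \<open>(i) epsilon-skew-symmetry\<close>
     (\<forall>xs ds i. length xs = m \<longrightarrow> homog_list G xs ds \<longrightarrow> Suc i < m \<longrightarrow>
        br xs = - smult (eps (ds ! i) (ds ! Suc i)) (br (swap_adj i xs))) \<and>
     \<comment> \<open>(ii) epsilon-Hom-Nambu-Filippov identity\<close>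
     (\<forall>xs dx ys dy. length xs = m - 1 \<longrightarrow> length ys = m \<longrightarrow>
        homog_list G xs dx \<longrightarrow> homog_list G ys dy \<longrightarrow>
        br (map alpha xs @ [br ys]) =
        (\<Sum>i<m. smult (eps (sum_list dx) (sum_list (take i dy)))
            (br (map alpha (take i ys) @ [br (xs @ [ys ! i])] @ map alpha (drop (Suc i) ys)))))"

end

theory Submission
  imports Defs
begin

lemma lin0: "Vector_Spaces.linear s1 s2 f \<Longrightarrow> f 0 = 0"
  unfolding Vector_Spaces.linear_def using module_hom.zero by blast

lemma vs_half:
  fixes smult :: "'k::field_char_0 \<Rightarrow> 'v::ab_group_add \<Rightarrow> 'v" and v :: 'v
  assumes "vector_space smult" "v = - v" shows "v = 0"
proof -
  interpret vector_space smult by fact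
  have "smult 2 v = v + v" by (metis one_add_one scale_left_distrib scale_one)
  also have "... = 0" using assms(2) by (metis add.right_inverse)
  finally have "smult (1/2) (smult 2 v) = 0" by simp
  then show ?thesis by simp
qed

lemma vs_one: "vector_space s \<Longrightarrow> s 1 v = v"
proof -
  assume "vector_space s" then interpret vector_space s .
  show ?thesis by simp
qed

lemma vs_zero: "vector_space s \<Longrightarrow> s c 0 = 0"
proof -
  assume "vector_space s" then interpret vector_space s .
  show ?thesis by simp
qed

lemma sum_rep0[simp]: "sum_list (replicate p (0::'g::ab_group_add)) = 0"
  by (induction p) auto

lemma homog_append:
  "homog_list G xs ds \<Longrightarrow> homog_list G ys es \<Longrightarrow> homog_list G (xs @ ys) (ds @ es)"
  unfolding homog_list_def by (auto simp: nth_append)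

lemma swap_adj_append:
  "swap_adj (length as + i) (as @ xs) = as @ swap_adj i xs"
  unfolding swap_adj_def by (simp add: list_update_append nth_append)

lemma swap_adj_length[simp]: "length (swap_adj i xs) = length xs"
  unfolding swap_adj_def by simp

lemma homog_swap:
  assumes "homog_list G xs ds" "Suc i < length xs"
  shows "homog_list G (swap_adj i xs) (swap_adj i ds)"
  using assms unfolding homog_list_def swap_adj_def
  by (auto simp: nth_list_update)

lemma eps00:
  assumes "bicharacter eps" shows "eps 0 0 = 1"
proof -
  have "eps 0 (0+0) = eps 0 0 * eps 0 0" using assms unfolding bicharacter_def by blast
  moreover have "eps 0 0 \<noteq> 0" using assms unfolding bicharacter_def by blast
  ultimately show ?thesis by simp
qed

lemma repeated_zero:
  fixes smult :: "'k::field_char_0 \<Rightarrow> 'v::ab_group_add \<Rightarrow> 'v"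
  assumes H: "hom_lie_color n smult G br eps alpha"
  shows "\<And>zs ds k. length zs = n \<Longrightarrow> homog_list G zs ds \<Longrightarrow> k = j + Suc d \<Longrightarrow> k < n \<Longrightarrow>
     zs ! j = zs ! k \<Longrightarrow> ds ! j = 0 \<Longrightarrow> ds ! k = 0 \<Longrightarrow> br zs = 0"
proof (induction d)
  have vs: "vector_space smult" using H unfolding hom_lie_color_def graded_vs_def by blast
  have bc: "bicharacter eps" using H unfolding hom_lie_color_def by blast
  have skew: "\<And>xs ds i. length xs = n \<Longrightarrow> homog_list G xs ds \<Longrightarrow> Suc i < n \<Longrightarrow>
        br xs = - smult (eps (ds ! i) (ds ! Suc i)) (br (swap_adj i xs))"
    using H unfolding hom_lie_color_def by blast
  {
  case 0
  then have e: "zs ! Suc j = zs ! j" by simp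
  have sw: "swap_adj j zs = zs" unfolding swap_adj_def e by (metis list_update_id e)
  have "br zs = - smult (eps 0 0) (br zs)" using skew[OF 0(1,2), of j] 0 sw by simp
  then have "br zs = - br zs" using eps00[OF bc] vs by (simp add: vs_one)
  then show ?case using vs_half[OF vs] by blast
  next
  case (Suc d)
  define i where "i = j + Suc d"
  have k: "k = Suc i" using Suc i_def by simp
  let ?zs = "swap_adj i zs" and ?ds = "swap_adj i ds"
  have hl: "homog_list G ?zs ?ds" using homog_swap[OF Suc(3)] Suc(2,5) k by simp
  have ld: "length ds = n" using Suc(2,3) unfolding homog_list_def by simp
  have "br ?zs = 0"
  proof (rule Suc(1)[OF _ hl, of i])
    show "length ?zs = n" using Suc(2) by simp
    show "i = j + Suc d" by (simp add: i_def)
    show "i < n" using Suc k by simp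
    show "?zs ! j = ?zs ! i" using Suc(2,5,6) k i_def unfolding swap_adj_def by (simp add: nth_list_update)
    show "?ds ! j = 0" using Suc(7) ld Suc(5) k i_def unfolding swap_adj_def by (simp add: nth_list_update)
    show "?ds ! i = 0" using Suc(8) ld Suc(5) k i_def unfolding swap_adj_def by (simp add: nth_list_update)
  qed
  then show ?case using skew[OF Suc(2,3), of i] Suc k vs
    by (simp add: vs_zero)
  }
qed

theorem corollary3p7:
  fixes smult :: "'k::field_char_0 \<Rightarrow> 'v::ab_group_add \<Rightarrow> 'v"
    and G :: "'g::ab_group_add \<Rightarrow> 'v set"
    and br :: "'v list \<Rightarrow> 'v"
    and eps :: "'g \<Rightarrow> 'g \<Rightarrow> 'k"
    and alpha :: "'v \<Rightarrow> 'v"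
    and n p :: nat
    and as :: "'v list"
  assumes "hom_lie_color n smult G br eps alpha"
    and "n \<ge> 3"
    and "0 < p" and "p < n"
    and "length as = p"
    and "\<forall>i<p. as ! i \<in> G 0"
    and "\<forall>i<p. alpha (as ! i) = as ! i"
  shows "hom_lie_color (n - p) smult G (\<lambda>xs. br (as @ xs)) eps alpha"
proof -
  note H = assms(1)
  have vs: "vector_space smult" using H unfolding hom_lie_color_def graded_vs_def by blast
  have lin: "\<And>xs i. length xs = n \<Longrightarrow> i < n \<Longrightarrow> Vector_Spaces.linear smult smult (\<lambda>v. br (xs[i := v]))"
    using H unfolding hom_lie_color_def by blast
  have deg: "\<And>xs ds. length xs = n \<Longrightarrow> homog_list G xs ds \<Longrightarrow> br xs \<in> G (sum_list ds)"
    using H unfolding hom_lie_color_def by blast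
  have skew: "\<And>xs ds i. length xs = n \<Longrightarrow> homog_list G xs ds \<Longrightarrow> Suc i < n \<Longrightarrow>
        br xs = - smult (eps (ds ! i) (ds ! Suc i)) (br (swap_adj i xs))"
    using H unfolding hom_lie_color_def by blast
  have fil: "\<And>xs dx ys dy. length xs = n - 1 \<Longrightarrow> length ys = n \<Longrightarrow>
        homog_list G xs dx \<Longrightarrow> homog_list G ys dy \<Longrightarrow>
        br (map alpha xs @ [br ys]) =
        (\<Sum>i<n. smult (eps (sum_list dx) (sum_list (take i dy)))
            (br (map alpha (take i ys) @ [br (xs @ [ys ! i])] @ map alpha (drop (Suc i) ys))))"
    using H unfolding hom_lie_color_def by blast
  have has: "homog_list G as (replicate p 0)"
    using assms(5,6) unfolding homog_list_def by simp
  have alas: "map alpha as = as"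
    using assms(5,7) by (simp add: map_idI list_eq_iff_nth_eq)
  show ?thesis
    unfolding hom_lie_color_def
  proof (intro conjI allI impI)
    show "graded_vs smult G" "bicharacter eps" "Vector_Spaces.linear smult smult alpha"
      using H unfolding hom_lie_color_def by blast+
    show "alpha ` G a \<subseteq> G a" for a
      using H unfolding hom_lie_color_def by blast
  next
    fix xs :: "'v list" and i
    assume "length xs = n - p" "i < n - p"
    then have "Vector_Spaces.linear smult smult (\<lambda>v. br ((as @ xs)[p + i := v]))"
      using lin[of "as @ xs" "p + i"] assms by simp
    then show "Vector_Spaces.linear smult smult (\<lambda>v. br (as @ xs[i := v]))"
      using assms(5) by (simp add: list_update_append)
  next
    fix xs ds
    assume "length xs = n - p" "homog_list G xs ds"
    then have "br (as @ xs) \<in> G (sum_list (replicate p 0 @ ds))"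
      using deg[OF _ homog_append[OF has]] assms by simp
    moreover have "sum_list (replicate p (0::'g)) = 0" by (induction p) auto
    ultimately show "br (as @ xs) \<in> G (sum_list ds)" by simp
  next
    fix xs ds i
    assume a: "length xs = n - p" "homog_list G xs ds" "Suc i < n - p"
    have "br (as @ xs) = - smult (eps ((replicate p 0 @ ds) ! (p + i)) ((replicate p 0 @ ds) ! Suc (p + i)))
        (br (swap_adj (p + i) (as @ xs)))"
      using skew[OF _ homog_append[OF has a(2)]] a assms by simp
    then show "br (as @ xs) = - smult (eps (ds ! i) (ds ! Suc i)) (br (as @ swap_adj i xs))"
      using swap_adj_append[of as i xs] assms(5) by (simp add: nth_append)
  next
    fix xs dx ys dy
    assume a: "length xs = n - p - 1" "length ys = n - p" "homog_list G xs dx" "homog_list G ys dy"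
    let ?X = "as @ xs" and ?Y = "as @ ys" and ?dX = "replicate p 0 @ dx" and ?dY = "replicate p 0 @ dy"
    have hX: "homog_list G ?X ?dX" using homog_append[OF has a(3)] .
    have hY: "homog_list G ?Y ?dY" using homog_append[OF has a(4)] .
    define f where "f i = smult (eps (sum_list ?dX) (sum_list (take i ?dY)))
            (br (map alpha (take i ?Y) @ [br (?X @ [?Y ! i])] @ map alpha (drop (Suc i) ?Y)))" for i
    have main: "br (map alpha ?X @ [br ?Y]) = (\<Sum>i<n. f i)"
      unfolding f_def by (rule fil[OF _ _ hX hY]) (use a assms in auto)
    have lhs: "map alpha ?X @ [br ?Y] = as @ map alpha xs @ [br (as @ ys)]"
      using alas by simp
    have z: "f i = 0" if "i < p" for i
    proof -
      have "\<not> (n - Suc 0 < p)" using assms by simp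
      have "br (?X @ [?Y ! i]) = 0"
      proof (rule repeated_zero[OF H, of "?X @ [?Y ! i]" "?dX @ [0]" "n - 1" i "n - 2 - i"])
        show "length (?X @ [?Y ! i]) = n" using a assms by simp
        show "homog_list G (?X @ [?Y ! i]) (?dX @ [0])"
          using homog_append[OF hX, of "[?Y ! i]" "[0]"] that assms
          by (simp add: homog_list_def nth_append)
        show "n - 1 = i + Suc (n - 2 - i)" using that assms by simp
        show "n - 1 < n" using assms by simp
        show "(?X @ [?Y ! i]) ! i = (?X @ [?Y ! i]) ! (n - 1)"
          using that assms a \<open>\<not> (n - Suc 0 < p)\<close> by (simp add: nth_append)
        show "(?dX @ [0]) ! i = 0" using that assms by (simp add: nth_append)
        show "(?dX @ [0]) ! (n - 1) = 0" using that assms a hX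
          by (simp add: nth_append homog_list_def)
      qed
      moreover have "Vector_Spaces.linear smult smult
          (\<lambda>v. br ((map alpha (take i ?Y) @ [0] @ map alpha (drop (Suc i) ?Y))[i := v]))"
        by (rule lin) (use that assms a in auto)
      then have "br ((map alpha (take i ?Y) @ [0] @ map alpha (drop (Suc i) ?Y))[i := 0]) = 0"
        by (rule lin0)
      ultimately show ?thesis unfolding f_def using that assms vs
        by (simp add: list_update_append vs_zero)
    qed
    have shift: "f (p + j) = smult (eps (sum_list dx) (sum_list (take j dy)))
          (br (as @ map alpha (take j ys) @ [br (as @ xs @ [ys ! j])] @ map alpha (drop (Suc j) ys)))" for j
      unfolding f_def using assms alas by (simp add: nth_append)
    have split: "(\<Sum>i<p + m. f i) = (\<Sum>i<p. f i) + (\<Sum>j<m. f (p + j))" for m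
      by (induction m) (simp_all add: add.assoc)
    have "(\<Sum>i<n. f i) = (\<Sum>j<n - p. f (p + j))"
      using split[of "n - p"] z assms by simp
    then show "br (as @ map alpha xs @ [br (as @ ys)]) =
        (\<Sum>i<n - p. smult (eps (sum_list dx) (sum_list (take i dy)))
            (br (as @ map alpha (take i ys) @ [br (as @ xs @ [ys ! i])] @ map alpha (drop (Suc i) ys))))"
      using main lhs shift by simp
  qed
qed

end
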